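(* Let $R$ be a tournament on $[n]$. Then there is a positive integer $M$ such that for every integer $N\ge M$ there exists a regular $n$ partition $\mathcal A=\{A_1,\dots,A_n\}$ of $[Nn]$ with $R[\mathcal A]=R$; that is, for $i,j\in[n]$, $A_i\to A_j$ if and only if $(i,j)\in R$.
   Context: A tournament on $[n]$ is $R\subset[n]\times[n]$ with no diagonal pairs and exactly one of $(i,j),(j,i)$ for each distinct $i,j$. A regular $n$ partition of $[Nn]=\{1,\dots,Nn\}$ is a partition $\{A_1,\dots,A_n\}$ into $n$ disjoint sets each of cardinality $N$. For such a partition, $R[\mathcal A]=\{(i,j)\in[n]\times[n]: |\{(a,b)\in A_i\times A_j:a>b\}|>N^2/2\}$, and $A_i\to A_j$ means $(i,j)\in R[\mathcal A]$. *)

theory Defs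
  imports Complex_Main
begin

definition tournament :: "nat \<Rightarrow> (nat \<times> nat) set \<Rightarrow> bool" where
  "tournament n R \<longleftrightarrow> R \<subseteq> {1..n} \<times> {1..n} \<and> (\<forall>i. (i, i) \<notin> R) \<and>
     (\<forall>i\<in>{1..n}. \<forall>j\<in>{1..n}. i \<noteq> j \<longrightarrow> ((i, j) \<in> R \<longleftrightarrow> (j, i) \<notin> R))"

definition regular_partition :: "nat \<Rightarrow> nat \<Rightarrow> (nat \<Rightarrow> nat set) \<Rightarrow> bool" where
  "regular_partition N n A \<longleftrightarrow>
     (\<forall>i\<in>{1..n}. card (A i) = N) \<and>
     (\<forall>i\<in>{1..n}. \<forall>j\<in>{1..n}. i \<noteq> j \<longrightarrow> A i \<inter> A j = {}) \<and>
     (\<Union>i\<in>{1..n}. A i) = {1..N * n}"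

definition induced_rel :: "nat \<Rightarrow> nat \<Rightarrow> (nat \<Rightarrow> nat set) \<Rightarrow> (nat \<times> nat) set" where
  "induced_rel N n A = {(i, j). i \<in> {1..n} \<and> j \<in> {1..n} \<and>
      real (card {(a, b). a \<in> A i \<and> b \<in> A j \<and> a > b}) > real N ^ 2 / 2}"

end

theory Submission
  imports Defs
begin


definition rk :: "nat \<Rightarrow> (nat \<Rightarrow> int) \<Rightarrow> nat \<Rightarrow> nat" where
  "rk n \<kappa> x = card {y\<in>{1..n}. \<kappa> y < \<kappa> x}"

lemma rk_less_iff:
  assumes "inj_on \<kappa> {1..n}" "x \<in> {1..n}" "y \<in> {1..n}"
  shows "rk n \<kappa> x < rk n \<kappa> y \<longleftrightarrow> \<kappa> x < \<kappa> y"
proof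
  assume h: "\<kappa> x < \<kappa> y"
  have "{z\<in>{1..n}. \<kappa> z < \<kappa> x} \<subset> {z\<in>{1..n}. \<kappa> z < \<kappa> y}"
    using h assms by auto
  then show "rk n \<kappa> x < rk n \<kappa> y" unfolding rk_def by (intro psubset_card_mono) auto
next
  assume h: "rk n \<kappa> x < rk n \<kappa> y"
  show "\<kappa> x < \<kappa> y"
  proof (rule ccontr)
    assume "\<not> \<kappa> x < \<kappa> y"
    then have "{z\<in>{1..n}. \<kappa> z < \<kappa> y} \<subseteq> {z\<in>{1..n}. \<kappa> z < \<kappa> x}" by auto
    then have "rk n \<kappa> y \<le> rk n \<kappa> x" unfolding rk_def by (intro card_mono) auto
    with h show False by simp
  qed
qed

lemma rk_bij:
  assumes "inj_on \<kappa> {1..n}"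
  shows "bij_betw (rk n \<kappa>) {1..n} {0..<n}"
proof -
  have inj: "inj_on (rk n \<kappa>) {1..n}"
  proof (rule inj_onI)
    fix x y assume xy: "x \<in> {1..n}" "y \<in> {1..n}" "rk n \<kappa> x = rk n \<kappa> y"
    show "x = y"
    proof (rule ccontr)
      assume "x \<noteq> y"
      then have "\<kappa> x \<noteq> \<kappa> y" using assms xy \<open>x \<noteq> y\<close> by (auto dest: inj_onD)
      then have "\<kappa> x < \<kappa> y \<or> \<kappa> y < \<kappa> x" by auto
      then show False using rk_less_iff[OF assms, of x y] rk_less_iff[OF assms, of y x] xy by auto
    qed
  qed
  have sub: "rk n \<kappa> ` {1..n} \<subseteq> {0..<n}"
  proof
    fix v assume "v \<in> rk n \<kappa> ` {1..n}"
    then obtain x where x: "x \<in> {1..n}" "v = rk n \<kappa> x" by auto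
    have "x \<notin> {y\<in>{1..n}. \<kappa> y < \<kappa> x}" by simp
    then have "{y\<in>{1..n}. \<kappa> y < \<kappa> x} \<subset> {1..n}" using x(1) by blast
    then have "rk n \<kappa> x < card {1..n}" unfolding rk_def by (intro psubset_card_mono) auto
    then show "v \<in> {0..<n}" using x by simp
  qed
  have "card (rk n \<kappa> ` {1..n}) = card {0..<n}" using card_image[OF inj] by simp
  then have "rk n \<kappa> ` {1..n} = {0..<n}" using card_subset_eq[OF _ sub] by simp
  with inj show ?thesis unfolding bij_betw_def by simp
qed

lemma rk_lt: "inj_on \<kappa> {1..n} \<Longrightarrow> x \<in> {1..n} \<Longrightarrow> rk n \<kappa> x < n"
  using rk_bij bij_betwE by fastforce

lemma divmod_eq:
  fixes n k l p q :: nat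
  assumes "p < n" "q < n" "k*n + p = l*n + q"
  shows "k = l \<and> p = q"
proof -
  have "k = (k*n+p) div n" using assms(1) by simp
  also have "\<dots> = (l*n+q) div n" using assms(3) by simp
  also have "\<dots> = l" using assms(2) by simp
  finally have "k = l" .
  then show ?thesis using assms by simp
qed

lemma lex_lt:
  fixes n k l p q :: nat
  assumes "p < n" "q < n"
  shows "l*n + q < k*n + p \<longleftrightarrow> l < k \<or> (l = k \<and> q < p)"
proof (cases "l < k")
  case True
  then have "(l+1)*n \<le> k*n" by (intro mult_le_mono) auto
  then show ?thesis using assms True by auto
next
  case False
  then have "k*n \<le> l*n" by simp
  show ?thesis
  proof (cases "k < l")
    case True
    then have "(k+1)*n \<le> l*n" by (intro mult_le_mono) auto
    then show ?thesis using assms True by auto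
  next
    case False
    then show ?thesis using \<open>\<not> l < k\<close> by auto
  qed
qed


definition blk :: "nat \<Rightarrow> nat \<Rightarrow> (nat \<Rightarrow> nat \<Rightarrow> int) \<Rightarrow> nat \<Rightarrow> nat set" where
  "blk N n K i = (\<lambda>k. k*n + rk n (K k) i + 1) ` {..<N}"

lemma blk_partition:
  assumes inj: "\<And>k. inj_on (K k) {1..n}" and n: "n > 0"
  shows "regular_partition N n (blk N n K)"
  unfolding regular_partition_def
proof (intro conjI ballI impI)
  fix i assume i: "i \<in> {1..n}"
  have "inj_on (\<lambda>k. k*n + rk n (K k) i + 1) {..<N}"
  proof (rule inj_onI)
    fix k l assume "k*n + rk n (K k) i + 1 = l*n + rk n (K l) i + 1"
    then show "k = l" using divmod_eq[OF rk_lt[OF inj i] rk_lt[OF inj i]] by simp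
  qed
  then show "card (blk N n K i) = N" unfolding blk_def by (simp add: card_image)
next
  fix i j assume i: "i \<in> {1..n}" and j: "j \<in> {1..n}" and ij: "i \<noteq> j"
  show "blk N n K i \<inter> blk N n K j = {}"
  proof (rule ccontr)
    assume "blk N n K i \<inter> blk N n K j \<noteq> {}"
    then obtain k l where "k*n + rk n (K k) i + 1 = l*n + rk n (K l) j + 1"
      unfolding blk_def by auto
    then have "k = l \<and> rk n (K k) i = rk n (K l) j"
      using divmod_eq[OF rk_lt[OF inj i] rk_lt[OF inj j]] by simp
    then have "rk n (K k) i = rk n (K k) j" by metis
    moreover have "inj_on (rk n (K k)) {1..n}" using bij_betw_imp_inj_on[OF rk_bij[OF inj]] .
    ultimately have "i = j" using i j inj_onD by metis
    with ij show False by simp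
  qed
next
  show "(\<Union>i\<in>{1..n}. blk N n K i) = {1..N * n}"
  proof
    show "(\<Union>i\<in>{1..n}. blk N n K i) \<subseteq> {1..N * n}"
    proof
      fix a assume "a \<in> (\<Union>i\<in>{1..n}. blk N n K i)"
      then obtain i k where i: "i \<in> {1..n}" and k: "k < N" and a: "a = k*n + rk n (K k) i + 1"
        unfolding blk_def by auto
      have "(k+1)*n \<le> N*n" using k by (intro mult_le_mono) auto
      then show "a \<in> {1..N*n}" using a rk_lt[OF inj i, of k] by auto
    qed
  next
    show "{1..N * n} \<subseteq> (\<Union>i\<in>{1..n}. blk N n K i)"
    proof
      fix a assume a: "a \<in> {1..N*n}"
      define k where "k = (a - 1) div n"
      define p where "p = (a - 1) mod n"
      have p: "p < n" using n p_def by simp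
      have ak: "a = k*n + p + 1" using a unfolding k_def p_def by simp
      have am: "a - 1 < N*n" using a by auto
      have "k < N" unfolding k_def using less_mult_imp_div_less[OF am] .
      have "p \<in> rk n (K k) ` {1..n}" using rk_bij[OF inj, of k] p unfolding bij_betw_def by simp
      then obtain i where i: "i \<in> {1..n}" "rk n (K k) i = p" by (metis imageE)
      then have "a \<in> blk N n K i" unfolding blk_def using ak \<open>k < N\<close> by auto
      then show "a \<in> (\<Union>i\<in>{1..n}. blk N n K i)" using i by auto
    qed
  qed
qed

lemma gauss2: "2 * (\<Sum>k<N. k) + N = N * (N::nat)"
  by (induction N) auto

lemma blk_count:
  assumes inj: "\<And>k. inj_on (K k) {1..n}" and i: "i \<in> {1..n}" and j: "j \<in> {1..n}"
  shows "2 * card {(a,b). a \<in> blk N n K i \<and> b \<in> blk N n K j \<and> a > b} + N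
         = N*N + 2 * card {k\<in>{..<N}. K k j < K k i}"
proof -
  define C where "C = {k\<in>{..<N}. K k j < K k i}"
  define U1 where "U1 = Sigma {..<N} (\<lambda>k. {..<k})"
  define U2 where "U2 = (\<lambda>k. (k,k)) ` C"
  define f where "f = (\<lambda>(k,l). (k*n + rk n (K k) i + 1, l*n + rk n (K l) j + 1))"
  have rki: "\<And>k. rk n (K k) i < n" using rk_lt[OF inj i] .
  have rkj: "\<And>k. rk n (K k) j < n" using rk_lt[OF inj j] .
  have key: "\<And>k l. (l*n + rk n (K l) j < k*n + rk n (K k) i) \<longleftrightarrow> (l < k \<or> (l = k \<and> K k j < K k i))"
    using lex_lt[OF rki rkj] rk_less_iff[OF inj j i] by auto
  have T: "{(a,b). a \<in> blk N n K i \<and> b \<in> blk N n K j \<and> a > b} = f ` (U1 \<union> U2)"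
  proof
    show "{(a,b). a \<in> blk N n K i \<and> b \<in> blk N n K j \<and> a > b} \<subseteq> f ` (U1 \<union> U2)"
    proof
      fix x assume "x \<in> {(a,b). a \<in> blk N n K i \<and> b \<in> blk N n K j \<and> a > b}"
      then obtain k l where kl: "k < N" "l < N" "x = f (k,l)"
        "l*n + rk n (K l) j < k*n + rk n (K k) i"
        unfolding blk_def f_def by auto
      then have "l < k \<or> (l = k \<and> K k j < K k i)" using key by blast
      then have "(k,l) \<in> U1 \<union> U2" using kl unfolding U1_def U2_def C_def by auto
      then show "x \<in> f ` (U1 \<union> U2)" using kl by auto
    qed
  next
    show "f ` (U1 \<union> U2) \<subseteq> {(a,b). a \<in> blk N n K i \<and> b \<in> blk N n K j \<and> a > b}"
    proof
      fix x assume "x \<in> f ` (U1 \<union> U2)"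
      then obtain k l where kl: "(k,l) \<in> U1 \<union> U2" "x = f (k,l)" by auto
      then have kl2: "k < N" "l < N" "l < k \<or> (l = k \<and> K k j < K k i)"
        unfolding U1_def U2_def C_def by auto
      then have "l*n + rk n (K l) j < k*n + rk n (K k) i" using key by blast
      then show "x \<in> {(a,b). a \<in> blk N n K i \<and> b \<in> blk N n K j \<and> a > b}"
        using kl2 kl(2) unfolding blk_def f_def by auto
    qed
  qed
  have injf: "inj_on f (U1 \<union> U2)"
  proof (rule inj_onI)
    fix x y assume "x \<in> U1 \<union> U2" "y \<in> U1 \<union> U2" and fxy: "f x = f y"
    obtain k l where x: "x = (k,l)" by (cases x)
    obtain k' l' where y: "y = (k',l')" by (cases y)
    have "k*n + rk n (K k) i = k'*n + rk n (K k') i" "l*n + rk n (K l) j = l'*n + rk n (K l') j"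
      using fxy x y unfolding f_def by auto
    then have "k = k'" "l = l'" using divmod_eq[OF rki rki] divmod_eq[OF rkj rkj] by blast+
    then show "x = y" using x y by simp
  qed
  have fin1: "finite U1" unfolding U1_def by auto
  have fin2: "finite U2" unfolding U2_def C_def by auto
  have disj: "U1 \<inter> U2 = {}" unfolding U1_def U2_def by auto
  have c1: "card U1 = (\<Sum>k<N. k)" unfolding U1_def by simp
  have c2: "card U2 = card C" unfolding U2_def by (simp add: card_image inj_on_def)
  have "card {(a,b). a \<in> blk N n K i \<and> b \<in> blk N n K j \<and> a > b} = card U1 + card U2"
    unfolding T using card_image[OF injf] card_Un_disjoint[OF fin1 fin2 disj] by simp
  then show ?thesis using c1 c2 gauss2[of N] unfolding C_def by simp
qed



definition sg :: "bool \<Rightarrow> int" where "sg b = (if b then 1 else -1)"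

definition key1 :: "nat \<times> nat \<Rightarrow> nat \<Rightarrow> int" where
  "key1 r x = (if x = snd r then 0 else if x = fst r then 1 else int x + 2)"
definition key2 :: "nat \<times> nat \<Rightarrow> nat \<Rightarrow> int" where
  "key2 r x = (if x = snd r then 1 else if x = fst r then 2 else - int x)"
definition Kf :: "(nat \<Rightarrow> nat \<times> nat) \<Rightarrow> nat \<Rightarrow> nat \<Rightarrow> nat \<Rightarrow> int" where
  "Kf e m k x = (if k < m then key1 (e k) x else if k < 2*m then key2 (e (k - m)) x
     else if even (k - 2*m) then int x else - int x)"

lemma key1_inj: "inj_on (key1 r) A"
  unfolding key1_def by (auto simp: inj_on_def split: if_splits)
lemma key2_inj: "inj_on (key2 r) A"
  unfolding key2_def by (auto simp: inj_on_def split: if_splits)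
lemma Kf_inj: "inj_on (Kf e m k) A"
proof -
  have neg: "inj_on (\<lambda>x. - int x) A" by (auto simp: inj_on_def)
  have pos: "inj_on (\<lambda>x. int x) A" by (auto simp: inj_on_def)
  consider (c1) "k < m" | (c2) "\<not> k < m" "k < 2*m" | (c3) "\<not> k < 2*m" "even (k - 2*m)"
    | (c4) "\<not> k < 2*m" "odd (k - 2*m)" by blast
  then show ?thesis
  proof cases
    case c1
    then have "Kf e m k = key1 (e k)" by (simp add: Kf_def fun_eq_iff)
    then show ?thesis using key1_inj by simp
  next
    case c2
    then have "Kf e m k = key2 (e (k - m))" by (simp add: Kf_def fun_eq_iff)
    then show ?thesis using key2_inj by simp
  next
    case c3
    then have "Kf e m k = (\<lambda>x. int x)" by (simp add: Kf_def fun_eq_iff)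
    then show ?thesis using pos by simp
  next
    case c4
    then have "Kf e m k = (\<lambda>x. - int x)" by (simp add: Kf_def fun_eq_iff)
    then show ?thesis using neg by simp
  qed
qed

definition gg :: "nat \<Rightarrow> nat \<Rightarrow> nat \<times> nat \<Rightarrow> int" where
  "gg a b r = sg (key1 r b < key1 r a) + sg (key2 r b < key2 r a)"

lemma gg_val:
  assumes "a \<noteq> b" "fst r \<noteq> snd r"
  shows "gg a b r = (if r = (a,b) then 2 else if r = (b,a) then -2 else 0)"
  using assms unfolding gg_def sg_def key1_def key2_def by (cases r) auto

lemma filler_sum: "(\<Sum>t<(L::nat). (if even t then s else - s)::int) = (if even L then 0 else s)"
  by (induction L) auto

lemma sg_sum:
  "(\<Sum>k<N. sg (P k)) = 2 * int (card {k\<in>{..<N}. P k}) - int N"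
proof -
  have "(\<Sum>k<N. sg (P k)) = (\<Sum>k<N. 2 * of_bool (P k) - 1)"
    by (rule sum.cong) (auto simp: sg_def)
  also have "\<dots> = 2 * (\<Sum>k<N. of_bool (P k)) - int N"
    by (simp add: sum_subtractf sum_distrib_left)
  also have "\<dots> = 2 * int (card {k\<in>{..<N}. P k}) - int N"
    by (simp add: Int_def)
  finally show ?thesis .
qed

lemma sumK:
  assumes e: "bij_betw e {0..<m} R" and ab: "a \<noteq> b" and N: "2*m \<le> N"
  shows "(\<Sum>k<N. sg (Kf e m k b < Kf e m k a)) =
     (\<Sum>r\<in>R. gg a b r) + (if even (N - 2*m) then 0 else sg (b < a))"
proof -
  let ?D = "\<lambda>k. sg (Kf e m k b < Kf e m k a)"
  have split1: "(\<Sum>k<N. ?D k) = (\<Sum>k\<in>{0..<m}. ?D k) + (\<Sum>k\<in>{m..<2*m}. ?D k) + (\<Sum>k\<in>{2*m..<N}. ?D k)"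
    using N by (simp add: lessThan_atLeast0 sum.atLeastLessThan_concat)
  have p1: "(\<Sum>k\<in>{0..<m}. ?D k) = (\<Sum>t\<in>{0..<m}. sg (key1 (e t) b < key1 (e t) a))"
    by (rule sum.cong) (auto simp: Kf_def)
  have "(\<Sum>k\<in>{m..<2*m}. ?D k) = (\<Sum>t\<in>{0..<m}. ?D (t + m))"
    using sum.shift_bounds_nat_ivl[of ?D 0 m m] by (simp add: mult_2)
  also have "\<dots> = (\<Sum>t\<in>{0..<m}. sg (key2 (e t) b < key2 (e t) a))"
    by (rule sum.cong) (auto simp: Kf_def)
  finally have p2: "(\<Sum>k\<in>{m..<2*m}. ?D k) = (\<Sum>t\<in>{0..<m}. sg (key2 (e t) b < key2 (e t) a))" .
  have "(\<Sum>k\<in>{0..<m}. ?D k) + (\<Sum>k\<in>{m..<2*m}. ?D k) = (\<Sum>t\<in>{0..<m}. gg a b (e t))"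
    unfolding p1 p2 gg_def by (simp add: sum.distrib)
  also have "\<dots> = (\<Sum>r\<in>R. gg a b r)"
    using sum.reindex_bij_betw[OF e, of "gg a b"] .
  finally have p12: "(\<Sum>k\<in>{0..<m}. ?D k) + (\<Sum>k\<in>{m..<2*m}. ?D k) = (\<Sum>r\<in>R. gg a b r)" .
  have "(\<Sum>k\<in>{2*m..<N}. ?D k) = (\<Sum>t\<in>{0..<N - 2*m}. ?D (t + 2*m))"
    using sum.shift_bounds_nat_ivl[of ?D 0 "2*m" "N - 2*m"] N by simp
  also have "\<dots> = (\<Sum>t\<in>{0..<N - 2*m}. (if even t then sg (b < a) else - sg (b < a)))"
    using ab by (intro sum.cong) (auto simp: Kf_def sg_def)
  also have "\<dots> = (if even (N - 2*m) then 0 else sg (b < a))"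
    using filler_sum[where L="N - 2*m" and s="sg (b < a)"] by (simp add: lessThan_atLeast0)
  finally have p3: "(\<Sum>k\<in>{2*m..<N}. ?D k) = (if even (N - 2*m) then 0 else sg (b < a))" .
  show ?thesis using split1 p12 p3 by simp
qed

lemma sumR:
  assumes fin: "finite R" and irr: "\<forall>r\<in>R. fst r \<noteq> snd r" and ab: "a \<noteq> b"
    and in1: "(a,b) \<in> R" and nin: "(b,a) \<notin> R"
  shows "(\<Sum>r\<in>R. gg a b r) = 2"
proof -
  have "(\<Sum>r\<in>R. gg a b r) = (\<Sum>r\<in>R. if r = (a,b) then 2 else 0)"
  proof (rule sum.cong)
    fix r assume r: "r \<in> R"
    then have "fst r \<noteq> snd r" using irr by blast
    moreover have "r \<noteq> (b,a)" using r nin by blast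
    ultimately show "gg a b r = (if r = (a,b) then 2 else 0)" using gg_val[OF ab] by simp
  qed simp
  also have "\<dots> = 2" using fin in1 by simp
  finally show ?thesis .
qed

lemma sumR2:
  assumes fin: "finite R" and irr: "\<forall>r\<in>R. fst r \<noteq> snd r" and ab: "a \<noteq> b"
    and in1: "(b,a) \<in> R" and nin: "(a,b) \<notin> R"
  shows "(\<Sum>r\<in>R. gg a b r) = -2"
proof -
  have "(\<Sum>r\<in>R. gg a b r) = (\<Sum>r\<in>R. if r = (b,a) then -2 else 0)"
  proof (rule sum.cong)
    fix r assume r: "r \<in> R"
    then have "fst r \<noteq> snd r" using irr by blast
    moreover have "r \<noteq> (a,b)" using r nin by blast
    ultimately show "gg a b r = (if r = (b,a) then -2 else 0)" using gg_val[OF ab] by simp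
  qed simp
  also have "\<dots> = -2" using fin in1 by simp
  finally show ?thesis .
qed


lemma card_cond:
  fixes c N :: nat
  shows "real c > real N ^ 2 / 2 \<longleftrightarrow> N * N < 2 * c"
proof -
  have "real c > real N ^ 2 / 2 \<longleftrightarrow> real (N * N) < real (2 * c)"
    by (simp add: power2_eq_square field_simps)
  also have "\<dots> \<longleftrightarrow> N * N < 2 * c" by (simp only: of_nat_less_iff)
  finally show ?thesis .
qed

lemma pair_iff:
  assumes i: "i \<in> {1..n}" and j: "j \<in> {1..n}"
  shows "(i,j) \<in> induced_rel N n (blk N n (Kf e m)) \<longleftrightarrow>
     0 < (\<Sum>k<N. sg (Kf e m k j < Kf e m k i))"
proof -
  let ?T = "{(a,b). a \<in> blk N n (Kf e m) i \<and> b \<in> blk N n (Kf e m) j \<and> a > b}"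
  let ?C = "card {k\<in>{..<N}. Kf e m k j < Kf e m k i}"
  have bc: "2 * card ?T + N = N*N + 2 * ?C" using blk_count[OF Kf_inj i j] .
  have "(i,j) \<in> induced_rel N n (blk N n (Kf e m)) \<longleftrightarrow> N * N < 2 * card ?T"
    using i j card_cond[of N "card ?T"] unfolding induced_rel_def by simp
  also have "\<dots> \<longleftrightarrow> N < 2 * ?C" using bc by linarith
  also have "\<dots> \<longleftrightarrow> 0 < 2 * int ?C - int N" by linarith
  also have "\<dots> \<longleftrightarrow> 0 < (\<Sum>k<N. sg (Kf e m k j < Kf e m k i))"
    using sg_sum[of "\<lambda>k. Kf e m k j < Kf e m k i" N] by simp
  finally show ?thesis .
qed

theorem theorem6p1:
  fixes n :: nat and R :: "(nat \<times> nat) set"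
  assumes "tournament n R"
  shows "\<exists>M::nat. M > 0 \<and> (\<forall>N\<ge>M. \<exists>A. regular_partition N n A \<and> induced_rel N n A = R)"
proof (cases "n = 0")
  case True
  then have R0: "R = {}" using assms unfolding tournament_def by auto
  have "regular_partition N n (\<lambda>_. {})" for N unfolding regular_partition_def using True by simp
  moreover have "induced_rel N n (\<lambda>_. {}) = R" for N unfolding induced_rel_def using True R0 by simp
  ultimately show ?thesis by (intro exI[of _ 1]) auto
next
  case False
  then have n: "n > 0" by simp
  have Rsub: "R \<subseteq> {1..n} \<times> {1..n}" using assms unfolding tournament_def by blast
  have fin: "finite R" using Rsub finite_subset by blast
  have irr: "\<forall>r\<in>R. fst r \<noteq> snd r" using assms unfolding tournament_def by auto
  have tour: "\<And>i j. i \<in> {1..n} \<Longrightarrow> j \<in> {1..n} \<Longrightarrow> i \<noteq> j \<Longrightarrow> (i,j) \<in> R \<longleftrightarrow> (j,i) \<notin> R"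
    using assms unfolding tournament_def by blast
  define m where "m = card R"
  obtain e where e: "bij_betw e {0..<m} R" using ex_bij_betw_nat_finite[OF fin] unfolding m_def by blast
  have main: "regular_partition N n (blk N n (Kf e m)) \<and> induced_rel N n (blk N n (Kf e m)) = R"
    if N: "N \<ge> 2*m+1" for N
  proof
    show "regular_partition N n (blk N n (Kf e m))" using blk_partition[OF Kf_inj n] .
    show "induced_rel N n (blk N n (Kf e m)) = R"
    proof (rule set_eqI)
      fix x :: "nat \<times> nat"
      obtain i j where x: "x = (i,j)" by (cases x)
      show "x \<in> induced_rel N n (blk N n (Kf e m)) \<longleftrightarrow> x \<in> R"
      proof (cases "i \<in> {1..n} \<and> j \<in> {1..n}")
        case False
        then have "x \<notin> R" using Rsub x by auto
        moreover have "x \<notin> induced_rel N n (blk N n (Kf e m))" using False x unfolding induced_rel_def by auto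
        ultimately show ?thesis by simp
      next
        case True
        then have i: "i \<in> {1..n}" and j: "j \<in> {1..n}" by auto
        let ?S = "(\<Sum>k<N. sg (Kf e m k j < Kf e m k i))"
        have pi: "x \<in> induced_rel N n (blk N n (Kf e m)) \<longleftrightarrow> 0 < ?S"
          using pair_iff[OF i j] x by simp
        show ?thesis
        proof (cases "i = j")
          case True
          have "?S = - int N" using True by (simp add: sg_def)
          then have "\<not> 0 < ?S" by simp
          moreover have "x \<notin> R" using True x irr by auto
          ultimately show ?thesis using pi by simp
        next
          case ij: False
          have N2: "2*m \<le> N" using N by simp
          have SK: "?S = (\<Sum>r\<in>R. gg i j r) + (if even (N - 2*m) then 0 else sg (j < i))"
            using sumK[OF e ij N2] .
          have fill: "\<bar>(if even (N - 2*m) then 0 else sg (j < i))\<bar> \<le> 1" by (simp add: sg_def)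
          show ?thesis
          proof (cases "(i,j) \<in> R")
            case True
            then have "(j,i) \<notin> R" using tour[OF i j ij] by simp
            then have "(\<Sum>r\<in>R. gg i j r) = 2" using sumR[OF fin irr ij True] by simp
            then have "0 < ?S" using SK fill by linarith
            then show ?thesis using pi x True by simp
          next
            case False
            then have "(j,i) \<in> R" using tour[OF i j ij] by simp
            then have "(\<Sum>r\<in>R. gg i j r) = -2" using sumR2[OF fin irr ij _ False] by simp
            then have "\<not> 0 < ?S" using SK fill by linarith
            then show ?thesis using pi x False by simp
          qed
        qed
      qed
    qed
  qed
  show ?thesis by (rule exI[of _ "2*m+1"]) (use main in auto)
qed

end
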